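(* Let $N=(V,E,c)$ be a network with $c_{\min}=\inf_{x\in V}c(x)>0$, fix $o\in V$ and $\gamma\in\mathbb{R}$, and let $K(x)=c(x)\min\{1,\langle x\rangle^{-2}(\log\langle x\rangle)^\gamma\}$. Let $X=(X_n)_{n\geq0}$ be the random walk on $N$ started at $x\in V$, and let $\tau_\dagger$ be the killing time of the coupled walk on $(V,E,c,K)$, so that conditionally on $X$, $\mathbf{P}_x(\tau_\dagger>n\mid X)=\prod_{i=0}^{n-1}\Big(1-\frac{K(X_i)}{c(X_i)+K(X_i)}\Big)$. Let $r>0$ and let $\mathscr{S}_r$ be the event that $\liminf_{n\to\infty}\frac{d(o,X_n)}{n^{1/2}(\log n)^r}>0$. If $\gamma+1<2r$, then $\mathbf{P}_x(\tau_\dagger=\infty\mid X)>0$ almost surely on the event $\mathscr{S}_r$.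
   Context: A network $(V,E,c)$ has conductances $c:E\to(0,\infty)$; $c(u)$ is the total conductance of oriented edges emanating from $u$, $c(u,v)$ that of oriented edges from $u$ to $v$, and the random walk on $N$ has transitions $c(u,v)/c(u)$. $d$ is the graph distance and $\langle x\rangle=2\vee d(o,x)$. The random walk on the network with killing $(V,E,c,K)$ has $P(u,v)=c(u,v)/(c(u)+K(u))$ and $P(u,\dagger)=K(u)/(c(u)+K(u))$; it is coupled with $X$ so that the two coincide until the killing time $\tau_\dagger$ (the first time the killed walk is at $\dagger$), with killing at each step from $X_i$ occurring independently given $X$ with probability $K(X_i)/(c(X_i)+K(X_i))$. *)

theory Defs
  imports "HOL-Probability.Probability"
begin

text \<open>A network on the countable vertex type 'v: c u v is the total conductance of
  oriented edges from u to v (0 if there is none).\<close>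

definition network :: "('v \<Rightarrow> 'v \<Rightarrow> real) \<Rightarrow> bool" where
  "network c \<longleftrightarrow> (\<forall>u v. c u v \<ge> 0) \<and> (\<forall>u v. c u v = c v u)
     \<and> (\<forall>u. c u summable_on UNIV) \<and> (\<forall>u v. (\<lambda>a b. c a b > 0)\<^sup>*\<^sup>* u v)"

definition cond :: "('v \<Rightarrow> 'v \<Rightarrow> real) \<Rightarrow> 'v \<Rightarrow> real" where
  "cond c u = (\<Sum>\<^sub>\<infinity>v. c u v)"

definition gdist :: "('v \<Rightarrow> 'v \<Rightarrow> real) \<Rightarrow> 'v \<Rightarrow> 'v \<Rightarrow> nat" where
  "gdist c u v = (LEAST k. ((\<lambda>a b. c a b > 0) ^^ k) u v)"

definition bracket :: "('v \<Rightarrow> 'v \<Rightarrow> real) \<Rightarrow> 'v \<Rightarrow> 'v \<Rightarrow> real" where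
  "bracket c o' x = max 2 (real (gdist c o' x))"

definition killing :: "('v \<Rightarrow> 'v \<Rightarrow> real) \<Rightarrow> 'v \<Rightarrow> real \<Rightarrow> 'v \<Rightarrow> real" where
  "killing c o' \<gamma> x = cond c x * min 1 ((bracket c o' x) powr (-2) * (ln (bracket c o' x)) powr \<gamma>)"

definition trans_prob :: "('v \<Rightarrow> 'v \<Rightarrow> real) \<Rightarrow> 'v \<Rightarrow> 'v \<Rightarrow> real" where
  "trans_prob c u v = c u v / cond c u"

definition is_random_walk :: "'a measure \<Rightarrow> ('v \<Rightarrow> 'v \<Rightarrow> real) \<Rightarrow> 'v \<Rightarrow> (nat \<Rightarrow> 'a \<Rightarrow> 'v) \<Rightarrow> bool" where
  "is_random_walk M c x X \<longleftrightarrow> prob_space M \<and>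
     (\<forall>i. X i \<in> measurable M (count_space UNIV)) \<and>
     (\<forall>n (v :: nat \<Rightarrow> 'v). measure M {\<omega> \<in> space M. \<forall>i\<le>n. X i \<omega> = v i}
        = (if v 0 = x then (\<Prod>i<n. trans_prob c (v i) (v (Suc i))) else 0))"

text \<open>P(tau = infinity | X) along a path: limit of the (decreasing) survival products\<close>
definition survival :: "('v \<Rightarrow> 'v \<Rightarrow> real) \<Rightarrow> ('v \<Rightarrow> real) \<Rightarrow> (nat \<Rightarrow> 'v) \<Rightarrow> real" where
  "survival c K p = lim (\<lambda>n. \<Prod>i<n. (1 - K (p i) / (cond c (p i) + K (p i))))"

end

theory Submission
  imports Defs "HOL-Real_Asymp.Real_Asymp"
begin


lemma bertrand:
  fixes s :: real assumes s: "s > 1"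
  shows "summable (\<lambda>n. ln (real n) powr (-s) / real n)"
proof -
  define f where "f n = ln (max 2 (real n)) powr (-s) / max 2 (real n)" for n :: nat
  have ln2: "ln (2::real) > 0" by simp
  have fnn: "f n \<ge> 0" for n unfolding f_def by simp
  have mono: "f (Suc m) \<le> f m" if "0 < m" for m
  proof -
    have a: "0 < max 2 (real m)" "max 2 (real m) \<le> max 2 (real (Suc m))" by auto
    have l: "0 < ln (max 2 (real m))" "ln (max 2 (real m)) \<le> ln (max 2 (real (Suc m)))"
      using a by auto
    have "ln (max 2 (real (Suc m))) powr (-s) \<le> ln (max 2 (real m)) powr (-s)"
      by (rule powr_mono2') (use s l in auto)
    then show ?thesis unfolding f_def
      by (intro frac_le) (use a in auto)
  qed
  have "summable (\<lambda>k. ln 2 powr (-s) * real k powr (-s))"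
    by (intro summable_mult) (simp add: summable_real_powr_iff s)
  moreover have "eventually (\<lambda>k. 2^k * f (2^k) = ln 2 powr (-s) * real k powr (-s)) sequentially"
    using eventually_ge_at_top[of 1]
  proof eventually_elim
    case (elim k)
    have "(2::real) \<le> 2^k" using elim by (metis power_one_right power_increasing one_le_numeral)
    then have m: "max 2 (real (2^k)) = 2^k" by simp
    show ?case unfolding f_def m by (simp add: ln_realpow powr_mult)
  qed
  ultimately have "summable (\<lambda>k. 2^k * f (2^k))" using summable_cong by fastforce
  then have "summable f" using condensation_test[of f] mono fnn by blast
  then show ?thesis
  proof (rule summable_comparison_test')
    fix n :: nat assume "n \<ge> 2"
    then have "max 2 (real n) = real n" by simp
    then show "norm (ln (real n) powr (-s) / real n) \<le> f n" unfolding f_def by simp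
  qed
qed


lemma t_powr:
  fixes a x r :: real assumes "a > 0" "x > 1"
  shows "(a * sqrt x * ln x powr r) powr (-2) = a powr (-2) * (ln x powr (-2*r) / x)"
proof -
  have "sqrt x powr (-2) = 1 / x" using assms
    by (simp add: powr_half_sqrt[symmetric] powr_powr powr_minus_divide)
  moreover have "(ln x powr r) powr (-2) = ln x powr (-2*r)" by (simp add: powr_powr mult.commute)
  ultimately show ?thesis by (simp add: powr_mult)
qed

lemma bound_neg:
  fixes a x r \<gamma> d :: real
  assumes g: "\<gamma> \<le> 0" and a: "a > 0" and x: "x \<ge> 3" and d: "d \<ge> a * sqrt x * ln x powr r"
    and t: "a * sqrt x * ln x powr r \<ge> x powr (1/4)"
  shows "min 1 (max 2 d powr (-2) * ln (max 2 d) powr \<gamma>)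
     \<le> (a powr (-2) * 4 powr (-\<gamma>)) * (ln x powr (-(2*r-\<gamma>)) / x)"
proof -
  define t where "t = a * sqrt x * ln x powr r"
  define b where "b = max 2 d"
  have lx: "ln x > 0" using x by simp
  have tp: "t > 0" unfolding t_def using a x lx by simp
  have tb: "t \<le> b" unfolding b_def t_def using d by simp
  have bp: "b > 0" using tp tb by simp
  have "ln (x powr (1/4)) = ln x / 4" using x by (simp add: ln_powr)
  moreover have "ln (x powr (1/4)) \<le> ln t"
  proof -
    have "x powr (1/4) > 0" using x by simp
    then show ?thesis using t tp unfolding t_def by (metis ln_le_cancel_iff)
  qed
  moreover have "ln t \<le> ln b" using tb tp by simp
  ultimately have lb: "ln x / 4 \<le> ln b" by linarith
  have "ln b powr \<gamma> \<le> (ln x / 4) powr \<gamma>"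
    by (rule powr_mono2') (use g lx lb in auto)
  also have "\<dots> = 4 powr (-\<gamma>) * ln x powr \<gamma>" by (simp add: powr_divide powr_minus_divide)
  finally have A: "ln b powr \<gamma> \<le> 4 powr (-\<gamma>) * ln x powr \<gamma>" .
  have B: "b powr (-2) \<le> t powr (-2)" by (rule powr_mono2') (use tp tb in auto)
  also have "\<dots> = a powr (-2) * (ln x powr (-2*r) / x)" unfolding t_def using a x by (intro t_powr) auto
  finally have B: "b powr (-2) \<le> a powr (-2) * (ln x powr (-2*r) / x)" .
  have "b powr (-2) * ln b powr \<gamma> \<le> (a powr (-2) * (ln x powr (-2*r) / x)) * (4 powr (-\<gamma>) * ln x powr \<gamma>)"
    using x by (intro mult_mono A B) (auto intro!: divide_nonneg_pos mult_nonneg_nonneg)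
  also have "\<dots> = (a powr (-2) * 4 powr (-\<gamma>)) * ((ln x powr (-2*r) * ln x powr \<gamma>) / x)" by simp
  also have "ln x powr (-2*r) * ln x powr \<gamma> = ln x powr (-(2*r-\<gamma>))" by (simp add: powr_add[symmetric])
  finally show ?thesis unfolding b_def by linarith
qed

lemma bound_pos:
  fixes a x r \<gamma> d :: real
  assumes g: "\<gamma> > 0" and a: "a > 0" and x: "x \<ge> 3" and d: "d \<ge> a * sqrt x * ln x powr r"
  shows "min 1 (max 2 d powr (-2) * ln (max 2 d) powr \<gamma>)
     \<le> a powr (-2) * (ln x powr (-(2*r-\<gamma>)) / x) + (2*\<gamma>) powr \<gamma> * x powr (-3/2)"
proof -
  define t where "t = a * sqrt x * ln x powr r"
  define b where "b = max 2 d"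
  have lx: "ln x > 0" using x by simp
  have tp: "t > 0" unfolding t_def using a x lx by simp
  have tb: "t \<le> b" unfolding b_def t_def using d by simp
  have b2: "b \<ge> 2" unfolding b_def by simp
  have lb: "ln b > 0" using b2 by simp
  have n1: "0 \<le> a powr (-2) * (ln x powr (-(2*r-\<gamma>)) / x)" using x by simp
  have n2: "0 \<le> (2*\<gamma>) powr \<gamma> * x powr (-3/2)" by simp
  have "b powr (-2) * ln b powr \<gamma> \<le> a powr (-2) * (ln x powr (-(2*r-\<gamma>)) / x) + (2*\<gamma>) powr \<gamma> * x powr (-3/2)"
  proof (cases "b \<le> x")
    case True
    have A: "ln b powr \<gamma> \<le> ln x powr \<gamma>" using True lb g b2 by (intro powr_mono2) auto
    have B: "b powr (-2) \<le> t powr (-2)" by (rule powr_mono2') (use tp tb in auto)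
    also have "\<dots> = a powr (-2) * (ln x powr (-2*r) / x)" unfolding t_def using a x by (intro t_powr) auto
    finally have B: "b powr (-2) \<le> a powr (-2) * (ln x powr (-2*r) / x)" .
    have "b powr (-2) * ln b powr \<gamma> \<le> (a powr (-2) * (ln x powr (-2*r) / x)) * ln x powr \<gamma>"
      using x by (intro mult_mono A B) (auto intro!: divide_nonneg_pos mult_nonneg_nonneg)
    also have "\<dots> = a powr (-2) * ((ln x powr (-2*r) * ln x powr \<gamma>) / x)" by simp
    also have "ln x powr (-2*r) * ln x powr \<gamma> = ln x powr (-(2*r-\<gamma>))" by (simp add: powr_add[symmetric])
    finally show ?thesis using n2 by linarith
  next
    case False
    define \<alpha> where "\<alpha> = 1 / (2*\<gamma>)"
    have al: "\<alpha> > 0" unfolding \<alpha>_def using g by simp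
    have "ln b \<le> b powr \<alpha> / \<alpha>" using ln_powr_bound[of b \<alpha>] b2 al by simp
    then have "ln b powr \<gamma> \<le> (b powr \<alpha> / \<alpha>) powr \<gamma>" using lb g by (intro powr_mono2) auto
    also have "\<dots> = (2*\<gamma>) powr \<gamma> * b powr (1/2)" unfolding \<alpha>_def using g
      by (simp add: powr_divide powr_powr powr_mult)
    finally have A: "ln b powr \<gamma> \<le> (2*\<gamma>) powr \<gamma> * b powr (1/2)" .
    have "b powr (-2) * ln b powr \<gamma> \<le> b powr (-2) * ((2*\<gamma>) powr \<gamma> * b powr (1/2))"
      using A by (intro mult_left_mono) auto
    also have "\<dots> = (2*\<gamma>) powr \<gamma> * b powr (-3/2)" by (simp add: powr_add[symmetric])
    also have "\<dots> \<le> (2*\<gamma>) powr \<gamma> * x powr (-3/2)"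
      using False x by (intro mult_left_mono powr_mono2') auto
    finally show ?thesis using n1 by linarith
  qed
  then show ?thesis unfolding b_def by linarith
qed

lemma survival_pos:
  fixes c :: "'v \<Rightarrow> 'v \<Rightarrow> real" and p :: "nat \<Rightarrow> 'v" and \<gamma> r :: real
  assumes cpos: "\<And>y. cond c y > 0" and r: "r > 0" and gr: "\<gamma> + 1 < 2 * r"
    and li: "liminf (\<lambda>n. ereal (real (gdist c o' (p n)) / (sqrt (real n) * ln (real n) powr r))) > 0"
  shows "survival c (killing c o' \<gamma>) p > 0"
proof -
  define dd where "dd n = real (gdist c o' (p n))" for n
  define m where "m y = min 1 ((bracket c o' y) powr (-2) * (ln (bracket c o' y)) powr \<gamma>)" for y
  have mp: "m (p n) = min 1 (max 2 (dd n) powr (-2) * ln (max 2 (dd n)) powr \<gamma>)" for n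
    unfolding m_def dd_def bracket_def by simp
  have m0: "m y \<ge> 0" for y
  proof -
    have "bracket c o' y \<ge> 2" unfolding bracket_def by simp
    then have "ln (bracket c o' y) > 0" by simp
    then show ?thesis unfolding m_def by simp
  qed
  have m1: "m y \<le> 1" for y unfolding m_def by simp
  obtain z where z: "0 < ereal z" "ereal z < liminf (\<lambda>n. ereal (dd n / (sqrt (real n) * ln (real n) powr r)))"
    using ereal_dense2[OF li[folded dd_def]] by blast
  have zp: "z > 0" using z(1) by simp
  have ev1: "eventually (\<lambda>n. z < dd n / (sqrt (real n) * ln (real n) powr r)) sequentially"
    using less_LiminfD[OF z(2)] by simp
  have ev2: "eventually (\<lambda>n. dd n \<ge> z * sqrt (real n) * ln (real n) powr r \<and> real n \<ge> 3) sequentially"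
    using ev1 eventually_ge_at_top[of "3::nat"]
  proof eventually_elim
    case (elim n)
    have "ln (real n) > 0" using elim by simp
    then have "sqrt (real n) * ln (real n) powr r > 0" using elim by simp
    then have "z * (sqrt (real n) * ln (real n) powr r) < dd n" using elim(1)
      by (simp add: pos_less_divide_eq)
    then show ?case using elim by (simp add: mult.assoc)
  qed
  define s where "s = 2*r - \<gamma>"
  have s1: "s > 1" unfolding s_def using gr by simp
  have summ: "summable (\<lambda>n. m (p n))"
  proof (cases "\<gamma> \<le> 0")
    case True
    have ev3: "eventually (\<lambda>n::nat. z * sqrt (real n) * ln (real n) powr r \<ge> real n powr (1/4)) sequentially"
      using zp r by real_asymp
    show ?thesis
    proof (rule summable_comparison_test_ev)
      show "summable (\<lambda>n. (z powr (-2) * 4 powr (-\<gamma>)) * (ln (real n) powr (-s) / real n))"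
        using bertrand[OF s1] by (rule summable_mult)
      show "eventually (\<lambda>n. norm (m (p n)) \<le> (z powr (-2) * 4 powr (-\<gamma>)) * (ln (real n) powr (-s) / real n)) sequentially"
        using ev2 ev3
      proof eventually_elim
        case (elim n)
        have "m (p n) \<le> (z powr (-2) * 4 powr (-\<gamma>)) * (ln (real n) powr (-(2*r-\<gamma>)) / real n)"
          unfolding mp using elim True zp by (intro bound_neg) auto
        then show ?case using m0[of "p n"] unfolding s_def by simp
      qed
    qed
  next
    case False
    show ?thesis
    proof (rule summable_comparison_test_ev)
      show "summable (\<lambda>n. z powr (-2) * (ln (real n) powr (-s) / real n) + (2*\<gamma>) powr \<gamma> * real n powr (-3/2))"
        by (intro summable_add summable_mult bertrand s1) (simp add: summable_real_powr_iff)
      show "eventually (\<lambda>n. norm (m (p n)) \<le> z powr (-2) * (ln (real n) powr (-s) / real n) + (2*\<gamma>) powr \<gamma> * real n powr (-3/2)) sequentially"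
        using ev2
      proof eventually_elim
        case (elim n)
        have "m (p n) \<le> z powr (-2) * (ln (real n) powr (-(2*r-\<gamma>)) / real n) + (2*\<gamma>) powr \<gamma> * real n powr (-3/2)"
          unfolding mp using elim False zp by (intro bound_pos) auto
        then show ?case using m0[of "p n"] unfolding s_def by simp
      qed
    qed
  qed
  define q where "q i = 1 - killing c o' \<gamma> (p i) / (cond c (p i) + killing c o' \<gamma> (p i))" for i
  have kq: "killing c o' \<gamma> (p i) = cond c (p i) * m (p i)" for i
    unfolding killing_def m_def by simp
  have qeq: "q i = 1 / (1 + m (p i))" for i
  proof -
    have "cond c (p i) > 0" by (rule cpos)
    moreover have "m (p i) \<ge> 0" by (rule m0)
    ultimately have cp: "cond c (p i) > 0" and mp0: "1 + m (p i) > 0" by auto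
    have e: "cond c (p i) + cond c (p i) * m (p i) = cond c (p i) * (1 + m (p i))"
      by (simp add: algebra_simps)
    have "cond c (p i) * m (p i) / (cond c (p i) + cond c (p i) * m (p i)) = m (p i) / (1 + m (p i))"
      unfolding e using cp by simp
    moreover have "1 - m (p i) / (1 + m (p i)) = 1 / (1 + m (p i))" using mp0 by (simp add: field_simps)
    ultimately show ?thesis unfolding q_def kq by simp
  qed
  have qpos: "q i > 0" for i unfolding qeq using m0[of "p i"] by simp
  have qn: "norm (q i - 1) \<le> m (p i)" for i
  proof -
    have "q i - 1 = - (m (p i) / (1 + m (p i)))" unfolding qeq using m0[of "p i"] by (simp add: field_simps)
    moreover have "m (p i) / (1 + m (p i)) \<le> m (p i)" using m0[of "p i"]
      by (simp add: divide_le_eq algebra_simps)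
    moreover have "m (p i) / (1 + m (p i)) \<ge> 0" using m0[of "p i"] by simp
    ultimately show ?thesis by simp
  qed
  have "summable (\<lambda>i. norm (q i - 1))"
    by (rule summable_comparison_test'[OF summ]) (use qn in simp)
  then have "convergent_prod q"
    by (intro abs_convergent_prod_imp_convergent_prod summable_imp_abs_convergent_prod)
  then obtain L where L: "(\<lambda>n. \<Prod>i\<le>n. q i) \<longlonglongrightarrow> L" "L \<noteq> 0"
    using convergent_prod_iff_nz_lim[of q] qpos by (metis less_irrefl)
  have "(\<lambda>n. \<Prod>i<Suc n. q i) \<longlonglongrightarrow> L" using L(1) by (simp add: lessThan_Suc_atMost)
  then have L2: "(\<lambda>n. \<Prod>i<n. q i) \<longlonglongrightarrow> L" by (rule LIMSEQ_imp_Suc)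
  have pn: "(\<Prod>i<n. q i) \<ge> 0" for n using qpos by (simp add: prod_nonneg less_imp_le)
  have "L \<ge> 0"
    by (rule LIMSEQ_le_const[OF L2]) (use pn in blast)
  moreover have "survival c (killing c o' \<gamma>) p = L"
    unfolding survival_def using L2 unfolding q_def by (rule limI)
  ultimately show ?thesis using L(2) by simp
qed

theorem lemma3p5:
  fixes c :: "'v::countable \<Rightarrow> 'v \<Rightarrow> real" and o' x :: 'v and \<gamma> r :: real
    and M :: "'a measure" and X :: "nat \<Rightarrow> 'a \<Rightarrow> 'v"
  assumes "network c"
    and "\<exists>cmin>0. \<forall>y. cond c y \<ge> cmin"
    and "is_random_walk M c x X"
    and "r > 0"
    and "\<gamma> + 1 < 2 * r"
  shows "AE \<omega> in M.
           liminf (\<lambda>n. ereal (real (gdist c o' (X n \<omega>)) / (sqrt (real n) * ln (real n) powr r))) > 0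
           \<longrightarrow> survival c (killing c o' \<gamma>) (\<lambda>n. X n \<omega>) > 0"
proof (rule AE_I2, rule impI)
  fix \<omega>
  assume li: "liminf (\<lambda>n. ereal (real (gdist c o' (X n \<omega>)) / (sqrt (real n) * ln (real n) powr r))) > 0"
  have cpos: "cond c y > 0" for y using assms(2) by (meson less_le_trans)
  show "survival c (killing c o' \<gamma>) (\<lambda>n. X n \<omega>) > 0"
    by (rule survival_pos[OF cpos assms(4) assms(5) li])
qed

end
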